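(* Consider Setting B with the regular nodes running Algorithm 2 (any graph sequence, any $f$-total Byzantine behavior). For $k\in\mathbb N$ and $0\le r\le k$ let $\Omega^{(r)}[k]=\{a^r\hat x_s[k-r]:s\in\mathcal S\cap\mathcal R\}$. Suppose that at some $k\in\mathbb N_+$, $\tau_i[k]=m$ for some $i\in(\mathcal V\setminus\mathcal S)\cap\mathcal R$ and $m\in\mathbb N_+$ (necessarily $m\le k$). Then $$\hat x_i[k]\in\mathrm{Conv}\Big(\bigcup_{r=1}^{m}\Omega^{(r)}[k]\Big),$$ where $\mathrm{Conv}$ denotes the convex hull.
   Context: Setting B. Scalar system $x[k+1]=ax[k]$, $a\in\mathbb R$, monitored by nodes $\mathcal V=\{1,\dots,N\}$ with measurements $y_i[k]=c_ix[k]$, $c_i\in\mathbb R$. Source set $\mathcal S=\{i\in\mathcal V:c_i\neq0\}$. Time-varying directed graphs $\mathcal G[k]=(\mathcal V,\mathcal E[k])$, $\mathcal N_i[k]=\{l\ne i:(l,i)\in\mathcal E[k]\}$; the union graph over an interval has the union of the edge sets. An unknown set $\mathcal A\subseteq\mathcal V$ of adversarial nodes with $|\mathcal A|\le f$ ($f$-total model; $\mathcal A$ may intersect $\mathcal S$); $\mathcal R=\mathcal V\setminus\mathcal A$ are regular. Adversaries are Byzantine: at each time they may send arbitrary, possibly different values (of both estimate and freshness index) to different out-neighbors, or send nothing, and may collude. At each time $k$, each node $l$ sends to its out-neighbors a pair (estimate, freshness index); regular $l$ sends its true $(\hat x_l[k],\tau_l[k])$. Algorithm 2 (executed by regular nodes).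 Regular source $i\in\mathcal S$: $\tau_i[k]=0$ for all $k$ and $\hat x_i[k+1]=a\hat x_i[k]+l_i(y_i[k]-c_i\hat x_i[k])$ with observer gain $l_i$. Regular non-source $i$: keeps $\hat x_i[k]$ (arbitrary initial), $\tau_i[k]\in\mathbb N\cup\{\omega\}$ with $\tau_i[0]=\omega$, and a list $\mathcal M_i$ of distinct node labels (initially empty, at most $2f+1$ entries, stored in $2f+1$ slots) with, for each $l\in\mathcal M_i$, a stored estimate $v_{i,l}$, stored index $d_{i,l}\in\mathbb N$ and time stamp $\phi_{i,l}$. At time $k$ let $\mathcal J_i[k]$ be the set of $l\in\mathcal N_i[k]$ whose reported index $\tau_l[k]$ lies in $\mathbb N$ and satisfies $\tau_l[k]\le k$. "Appending $l$ at time $k$" means: put $l$ in $\mathcal M_i$ (if absent), set $v_{i,l}=\hat x_l[k]$, $d_{i,l}=\tau_l[k]$ (reported values), $\phi_{i,l}=k$. Filtering update (F) at time $k$ (requires $|\mathcal M_i|=2f+1$): set $\tau_i[k+1]=\max_{l\in\mathcal M_i}d_{i,l}+1$; form $\bar x_{i,l}[k]=a^{k-\phi_{i,l}}v_{i,l}$ for $l\in\mathcal M_i$; discard the $f$ largest and $f$ smallest of these $2f+1$ values, call the remaining one $\bar x_i[k]$, and set $\hat x_i[k+1]=a\bar x_i[k]$. Case $\tau_i[k]=\omega$: let $\mathcal J'=\mathcal J_i[k]\setminus\mathcal M_i$. If $|\mathcal M_i|+|\mathcal J'|<2f+1$, append every $l\in\mathcal J'$, set $\tau_i[k+1]=\omega$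 and $\hat x_i[k+1]=a\hat x_i[k]$. Otherwise append the $2f+1-|\mathcal M_i|$ nodes of $\mathcal J'$ with smallest reported indices (ties broken arbitrarily) and perform (F). Case $\tau_i[k]\ne\omega$: for each $l\in\mathcal J_i[k]\cap\mathcal M_i$ with reported $\tau_l[k]<d_{i,l}$, append $l$ (refreshing its entries); then rank the nodes of $\mathcal M_i\cup(\mathcal J_i[k]\setminus\mathcal M_i)$ by index ($d_{i,l}$ for $l\in\mathcal M_i$, reported $\tau_l[k]$ otherwise), keep the $2f+1$ with smallest index (ties arbitrary), appending newcomers and deleting dropped nodes (a retained node keeps its storage slot; a newcomer occupies the slot of a dropped node), and perform (F). In all cases, after the step every stored $d_{i,l}$ is incremented by $1$, and $\mathcal M_i$, $v$, $\phi$ carry over to time $k+1$. *)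

theory Defs
  imports "HOL-Analysis.Analysis" "HOL-Library.Multiset"
begin

(* Freshness indices: nat option, where None encodes \<omega>.
  Messages: msg k l j is what node l sends to node j at time k:
  None = nothing sent, Some (x, t) = (estimate, freshness index). *)

definition Jset :: "(nat \<Rightarrow> ('n \<times> 'n) set) \<Rightarrow> (nat \<Rightarrow> 'n \<Rightarrow> 'n \<Rightarrow> (real \<times> nat option) option)
    \<Rightarrow> 'n \<Rightarrow> nat \<Rightarrow> 'n set" where
  "Jset E msg j k = {l. l \<noteq> j \<and> (l, j) \<in> E k \<and> (\<exists>y t. msg k l j = Some (y, Some t) \<and> t \<le> k)}"

(* Trimmed value: discard the f largest and f smallest of the 2f+1 values
  (i.e. entry f of the sorted list of values, with multiplicity). *)
definition trim_val :: "nat \<Rightarrow> real multiset \<Rightarrow> real" where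
  "trim_val f X = sorted_list_of_multiset X ! f"

definition filt :: "nat \<Rightarrow> real \<Rightarrow> nat \<Rightarrow> 'n set \<Rightarrow> ('n \<Rightarrow> real) \<Rightarrow> ('n \<Rightarrow> nat) \<Rightarrow> ('n \<Rightarrow> nat)
    \<Rightarrow> real \<times> nat option" where
  "filt f a k Ml v d phi =
     (a * trim_val f (image_mset (\<lambda>l. a ^ (k - phi l) * v l) (mset_set Ml)),
      Some (Max (d ` Ml) + 1))"

definition app_v :: "'n set \<Rightarrow> ('n \<Rightarrow> real) \<Rightarrow> ('n \<Rightarrow> real) \<Rightarrow> 'n \<Rightarrow> real" where
  "app_v U rx v = (\<lambda>l. if l \<in> U then rx l else v l)"
definition app_d :: "'n set \<Rightarrow> ('n \<Rightarrow> nat) \<Rightarrow> ('n \<Rightarrow> nat) \<Rightarrow> 'n \<Rightarrow> nat" where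
  "app_d U rt d = (\<lambda>l. if l \<in> U then rt l else d l)"
definition app_phi :: "'n set \<Rightarrow> nat \<Rightarrow> ('n \<Rightarrow> nat) \<Rightarrow> 'n \<Rightarrow> nat" where
  "app_phi U k phi = (\<lambda>l. if l \<in> U then k else phi l)"

(* One step (time k \<rightarrow> k+1) of Algorithm 2 at a regular non-source node.
  J: the set J_i[k]; rx, rt: reported estimates / indices (meaningful on J).
  State at time k: xh, tau, Ml (the list M_i), v, d, phi; primed: state at time k+1.
  Ties are broken arbitrarily (nondeterminism). *)
definition ns_step :: "nat \<Rightarrow> real \<Rightarrow> nat \<Rightarrow> 'n set \<Rightarrow> ('n \<Rightarrow> real) \<Rightarrow> ('n \<Rightarrow> nat)
    \<Rightarrow> real \<Rightarrow> nat option \<Rightarrow> 'n set \<Rightarrow> ('n \<Rightarrow> real) \<Rightarrow> ('n \<Rightarrow> nat) \<Rightarrow> ('n \<Rightarrow> nat)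
    \<Rightarrow> real \<Rightarrow> nat option \<Rightarrow> 'n set \<Rightarrow> ('n \<Rightarrow> real) \<Rightarrow> ('n \<Rightarrow> nat) \<Rightarrow> ('n \<Rightarrow> nat) \<Rightarrow> bool" where
  "ns_step f a k J rx rt xh tau Ml v d phi xh' tau' Ml' v' d' phi' \<longleftrightarrow>
    (\<exists>U N. v' = app_v U rx v \<and> phi' = app_phi U k phi
       \<and> d' = (\<lambda>l. app_d U rt d l + 1) \<and> Ml' = N \<and>
     (case tau of
        None \<Rightarrow>
          (card Ml + card (J - Ml) < 2 * f + 1 \<and> U = J - Ml \<and> N = Ml \<union> U
             \<and> xh' = a * xh \<and> tau' = None)
        \<or> (card Ml + card (J - Ml) \<ge> 2 * f + 1 \<and> U \<subseteq> J - Ml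
             \<and> card U = 2 * f + 1 - card Ml
             \<and> (\<forall>s\<in>U. \<forall>t\<in>(J - Ml) - U. rt s \<le> rt t)
             \<and> N = Ml \<union> U
             \<and> (xh', tau') = filt f a k N (app_v U rx v) (app_d U rt d) (app_phi U k phi))
      | Some _ \<Rightarrow>
          (let Rf = {l \<in> J \<inter> Ml. rt l < d l};
               d1 = app_d Rf rt d;
               C = Ml \<union> J;
               idx = (\<lambda>l. if l \<in> Ml then d1 l else rt l)
           in N \<subseteq> C \<and> card N = 2 * f + 1
              \<and> (\<forall>s\<in>N. \<forall>t\<in>C - N. idx s \<le> idx t)
              \<and> U = Rf \<union> (N - Ml)
              \<and> (xh', tau') = filt f a k N (app_v U rx v) (app_d U rt d) (app_phi U k phi))))"

(* Nodes: the finite type 'n (V = UNIV);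
  S = {i. c i \<noteq> 0}; Adv = adversarial set; gain = observer gains l_i.
  Adversaries' messages and internal variables are unconstrained. *)
definition alg2_exec :: "real \<Rightarrow> ('n \<Rightarrow> real) \<Rightarrow> ('n \<Rightarrow> real) \<Rightarrow> nat \<Rightarrow> 'n set
    \<Rightarrow> (nat \<Rightarrow> ('n \<times> 'n) set) \<Rightarrow> (nat \<Rightarrow> real)
    \<Rightarrow> (nat \<Rightarrow> 'n \<Rightarrow> 'n \<Rightarrow> (real \<times> nat option) option)
    \<Rightarrow> ('n \<Rightarrow> nat \<Rightarrow> real) \<Rightarrow> ('n \<Rightarrow> nat \<Rightarrow> nat option) \<Rightarrow> ('n \<Rightarrow> nat \<Rightarrow> 'n set)
    \<Rightarrow> ('n \<Rightarrow> nat \<Rightarrow> 'n \<Rightarrow> real) \<Rightarrow> ('n \<Rightarrow> nat \<Rightarrow> 'n \<Rightarrow> nat) \<Rightarrow> ('n \<Rightarrow> nat \<Rightarrow> 'n \<Rightarrow> nat) \<Rightarrow> bool" where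
  "alg2_exec a c gain f Adv E x msg xh tau M v d phi \<longleftrightarrow>
    (\<forall>k. x (Suc k) = a * x k) \<and>
    (\<forall>k l j. l \<notin> Adv \<longrightarrow> (l, j) \<in> E k \<longrightarrow> l \<noteq> j \<longrightarrow> msg k l j = Some (xh l k, tau l k)) \<and>
    (\<forall>s k. s \<notin> Adv \<longrightarrow> c s \<noteq> 0 \<longrightarrow>
        tau s k = Some 0 \<and> xh s (Suc k) = a * xh s k + gain s * (c s * x k - c s * xh s k)) \<and>
    (\<forall>j. j \<notin> Adv \<longrightarrow> c j = 0 \<longrightarrow>
        tau j 0 = None \<and> M j 0 = {} \<and>
        (\<forall>k. ns_step f a k (Jset E msg j k)
               (\<lambda>l. fst (the (msg k l j))) (\<lambda>l. the (snd (the (msg k l j))))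
               (xh j k) (tau j k) (M j k) (v j k) (d j k) (phi j k)
               (xh j (Suc k)) (tau j (Suc k)) (M j (Suc k)) (v j (Suc k)) (d j (Suc k)) (phi j (Suc k))))"

definition Omega :: "real \<Rightarrow> ('n \<Rightarrow> real) \<Rightarrow> 'n set \<Rightarrow> ('n \<Rightarrow> nat \<Rightarrow> real) \<Rightarrow> nat \<Rightarrow> nat \<Rightarrow> real set" where
  "Omega a c Adv xh r k = {a ^ r * xh s (k - r) | s. c s \<noteq> 0 \<and> s \<notin> Adv}"

end

theory Submission
  imports Defs
begin


lemma filt_sub_all:
  assumes "A \<subseteq># X" "\<forall>y\<in>#A. P y"
  shows "A \<subseteq># filter_mset P X"
proof -
  have "filter_mset P A = A" using assms(2) by (simp add: filter_mset_eq_conv)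
  with multiset_filter_mono[OF assms(1), of P] show ?thesis by simp
qed

lemma trim_in:
  fixes g :: "'n \<Rightarrow> real"
  assumes fin: "finite N" and cN: "card N \<ge> 2*f+1" and cA: "card (N \<inter> Adv) \<le> f"
    and cvx: "convex H" and good: "\<forall>l\<in>N - Adv. g l \<in> H"
  shows "trim_val f (image_mset g (mset_set N)) \<in> H"
proof -
  define X where "X = image_mset g (mset_set N)"
  define xs where "xs = sorted_list_of_multiset X"
  define t where "t = xs ! f"
  define G where "G = image_mset g (mset_set (N - Adv))"
  define B where "B = image_mset g (mset_set (N \<inter> Adv))"
  have XGB: "X = G + B"
  proof -
    have e: "N = (N - Adv) \<union> (N \<inter> Adv)" by blast
    have "mset_set N = mset_set (N - Adv) + mset_set (N \<inter> Adv)"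
      by (subst e, rule mset_set_Union) (use fin in auto)
    thus ?thesis unfolding X_def G_def B_def by simp
  qed
  have sB: "size B \<le> f" using cA by (simp add: B_def)
  have mx: "mset xs = X" by (simp add: xs_def)
  have srt: "sorted xs" by (simp add: xs_def)
  have "length xs = size X" by (metis mx size_mset)
  hence lx: "length xs = card N" by (simp add: X_def)
  have Gin: "\<And>y. y \<in># G \<Longrightarrow> y \<in> H" using good fin by (auto simp: G_def)
  have low: "\<exists>y. y \<in># G \<and> y \<le> t"
  proof (rule ccontr)
    assume "\<not> ?thesis"
    hence "filter_mset (\<lambda>y. y \<le> t) G = {#}" by auto
    hence e0: "filter_mset (\<lambda>y. y \<le> t) G = {#}" .
    have "filter_mset (\<lambda>y. y \<le> t) X = filter_mset (\<lambda>y. y \<le> t) B" unfolding XGB filter_union_mset e0 by simp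
    hence e: "filter_mset (\<lambda>y. y \<le> t) X \<subseteq># B" by simp
    have "mset (take (Suc f) xs) \<subseteq># X"
      by (metis append_take_drop_id mset_append mset_subset_eq_add_left mx)
    moreover have "\<forall>y\<in>#mset (take (Suc f) xs). y \<le> t"
    proof
      fix y assume "y \<in># mset (take (Suc f) xs)"
      then obtain p where "p < length (take (Suc f) xs)" "y = take (Suc f) xs ! p"
        by (metis in_set_conv_nth set_mset_mset)
      then show "y \<le> t" unfolding t_def using srt lx cN
        by (simp add: sorted_nth_mono)
    qed
    ultimately have "mset (take (Suc f) xs) \<subseteq># B" using e filt_sub_all subset_mset.order_trans by blast
    hence "size (mset (take (Suc f) xs)) \<le> size B" by (rule size_mset_mono)
    with sB lx cN show False by simp
  qed
  have upp: "\<exists>y. y \<in># G \<and> t \<le> y"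
  proof (rule ccontr)
    assume "\<not> ?thesis"
    hence "filter_mset (\<lambda>y. t \<le> y) G = {#}" by auto
    hence e0: "filter_mset (\<lambda>y. t \<le> y) G = {#}" .
    have "filter_mset (\<lambda>y. t \<le> y) X = filter_mset (\<lambda>y. t \<le> y) B" unfolding XGB filter_union_mset e0 by simp
    hence e: "filter_mset (\<lambda>y. t \<le> y) X \<subseteq># B" by simp
    have "mset (drop f xs) \<subseteq># X"
      by (metis append_take_drop_id mset_append mset_subset_eq_add_right mx)
    moreover have "\<forall>y\<in>#mset (drop f xs). t \<le> y"
    proof
      fix y assume "y \<in># mset (drop f xs)"
      then obtain p where "p < length (drop f xs)" "y = drop f xs ! p"
        by (metis in_set_conv_nth set_mset_mset)
      then show "t \<le> y" unfolding t_def using srt lx cN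
        by (simp add: sorted_nth_mono)
    qed
    ultimately have "mset (drop f xs) \<subseteq># B" using e filt_sub_all subset_mset.order_trans by blast
    hence "size (mset (drop f xs)) \<le> size B" by (rule size_mset_mono)
    with sB lx cN show False by simp
  qed
  from low upp obtain y1 y2 where "y1 \<in># G" "y1 \<le> t" "y2 \<in># G" "t \<le> y2" by blast
  hence "y1 \<in> H" "y2 \<in> H" by (auto intro: Gin)
  moreover have "is_interval H" using cvx by (simp add: is_interval_convex_1)
  ultimately have "t \<in> H" using \<open>y1 \<le> t\<close> \<open>t \<le> y2\<close> by (meson mem_is_interval_1_I)
  thus ?thesis by (simp add: trim_val_def t_def xs_def X_def)
qed


lemma scale_hull:
  fixes X :: "'n \<Rightarrow> nat \<Rightarrow> real"
  assumes "z \<in> convex hull (\<Union>r\<in>R. Omega a c Adv X r k)"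
  shows "a * z \<in> convex hull (\<Union>r\<in>Suc ` R. Omega a c Adv X r (Suc k))"
proof -
  have "a * z \<in> (*\<^sub>R) a ` (convex hull (\<Union>r\<in>R. Omega a c Adv X r k))"
    using assms by force
  also have "\<dots> = convex hull ((*\<^sub>R) a ` (\<Union>r\<in>R. Omega a c Adv X r k))"
    using convex_hull_scaling[of a "\<Union>r\<in>R. Omega a c Adv X r k"] by simp
  also have "\<dots> \<subseteq> convex hull (\<Union>r\<in>Suc ` R. Omega a c Adv X r (Suc k))"
  proof (rule hull_mono)
    show "(*\<^sub>R) a ` (\<Union>r\<in>R. Omega a c Adv X r k) \<subseteq> (\<Union>r\<in>Suc ` R. Omega a c Adv X r (Suc k))"
    proof
      fix w assume "w \<in> (*\<^sub>R) a ` (\<Union>r\<in>R. Omega a c Adv X r k)"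
      then obtain r s where r: "r \<in> R" "c s \<noteq> 0" "s \<notin> Adv" "w = a * (a ^ r * X s (k - r))"
        by (auto simp: Omega_def)
      hence "w = a ^ Suc r * X s (Suc k - Suc r)" by simp
      with r show "w \<in> (\<Union>r\<in>Suc ` R. Omega a c Adv X r (Suc k))"
        by (auto simp: Omega_def)
    qed
  qed
  finally show ?thesis .
qed

lemma hull_mono_R:
  "z \<in> convex hull (\<Union>r\<in>R. Omega a c Adv X r k) \<Longrightarrow> R \<subseteq> R' \<Longrightarrow>
   z \<in> convex hull (\<Union>r\<in>R'. Omega a c Adv X r k)"
  by (meson UN_mono hull_mono in_mono order_refl)



lemma ns_struct:
  assumes ns: "ns_step f a k J rx rt xh0 tau0 Ml v0 d0 phi0 xh1 tau1 Ml1 v1 d1 phi1"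
    and fin: "finite Ml" "finite J"
  shows "\<exists>U N. v1 = app_v U rx v0 \<and> phi1 = app_phi U k phi0
       \<and> d1 = (\<lambda>l. app_d U rt d0 l + 1) \<and> Ml1 = N \<and> U \<subseteq> J \<and> N \<subseteq> Ml \<union> U \<and>
       (tau1 = None \<or> (card N \<ge> 2*f+1 \<and>
          (xh1, tau1) = filt f a k N (app_v U rx v0) (app_d U rt d0) (app_phi U k phi0)))"
proof (cases tau0)
  case None
  from ns None obtain U N where b: "v1 = app_v U rx v0" "phi1 = app_phi U k phi0"
       "d1 = (\<lambda>l. app_d U rt d0 l + 1)" "Ml1 = N" and
     c: "(card Ml + card (J - Ml) < 2 * f + 1 \<and> U = J - Ml \<and> N = Ml \<union> U
             \<and> xh1 = a * xh0 \<and> tau1 = None)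
        \<or> (card Ml + card (J - Ml) \<ge> 2 * f + 1 \<and> U \<subseteq> J - Ml
             \<and> card U = 2 * f + 1 - card Ml
             \<and> (\<forall>s\<in>U. \<forall>t\<in>(J - Ml) - U. rt s \<le> rt t)
             \<and> N = Ml \<union> U
             \<and> (xh1, tau1) = filt f a k N (app_v U rx v0) (app_d U rt d0) (app_phi U k phi0))"
    unfolding ns_step_def by auto
  from c show ?thesis
  proof
    assume "card Ml + card (J - Ml) < 2 * f + 1 \<and> U = J - Ml \<and> N = Ml \<union> U
             \<and> xh1 = a * xh0 \<and> tau1 = None"
    with b show ?thesis by blast
  next
    assume h: "card Ml + card (J - Ml) \<ge> 2 * f + 1 \<and> U \<subseteq> J - Ml
             \<and> card U = 2 * f + 1 - card Ml
             \<and> (\<forall>s\<in>U. \<forall>t\<in>(J - Ml) - U. rt s \<le> rt t)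
             \<and> N = Ml \<union> U
             \<and> (xh1, tau1) = filt f a k N (app_v U rx v0) (app_d U rt d0) (app_phi U k phi0)"
    have fu: "finite U" using h fin by (meson finite_Diff finite_subset)
    have dj: "Ml \<inter> U = {}" using h by blast
    have "card N = card Ml + card U" using h fin fu dj by (metis card_Un_disjoint)
    hence "card N \<ge> 2*f+1" using h by simp
    with h b show ?thesis by blast
  qed
next
  case (Some t0)
  define Rf where "Rf = {l \<in> J \<inter> Ml. rt l < d0 l}"
  define dd where "dd = app_d Rf rt d0"
  define C where "C = Ml \<union> J"
  define idx where "idx = (\<lambda>l. if l \<in> Ml then dd l else rt l)"
  from ns Some obtain U N where b: "v1 = app_v U rx v0" "phi1 = app_phi U k phi0"
       "d1 = (\<lambda>l. app_d U rt d0 l + 1)" "Ml1 = N" and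
     c: "N \<subseteq> C \<and> card N = 2 * f + 1
              \<and> (\<forall>s\<in>N. \<forall>t\<in>C - N. idx s \<le> idx t)
              \<and> U = Rf \<union> (N - Ml)
              \<and> (xh1, tau1) = filt f a k N (app_v U rx v0) (app_d U rt d0) (app_phi U k phi0)"
    unfolding ns_step_def Let_def Rf_def dd_def C_def idx_def by auto
  have "U \<subseteq> J" using c by (auto simp: Rf_def C_def)
  moreover have "N \<subseteq> Ml \<union> U" using c by auto
  ultimately show ?thesis using b c by auto
qed



lemma step:
  fixes X :: "'n::finite \<Rightarrow> nat \<Rightarrow> real"
  assumes ns: "ns_step f a k J rx rt xh0 tau0 Ml v0 d0 phi0 xh1 tau1 Ml1 v1 d1 phi1"
    and cA: "card Adv \<le> f"
    and Jg: "\<forall>l\<in>J - Adv. rx l \<in> convex hull (\<Union>r\<in>{..rt l}. Omega a c Adv X r k)"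
    and Bg: "\<forall>l\<in>Ml - Adv. phi0 l \<le> k \<and> a^(k - phi0 l) * v0 l \<in> convex hull (\<Union>r\<in>{..d0 l}. Omega a c Adv X r k)"
  shows "(\<forall>m. tau1 = Some m \<longrightarrow> 1 \<le> m \<and> xh1 \<in> convex hull (\<Union>r\<in>{1..m}. Omega a c Adv X r (Suc k))) \<and>
         (\<forall>l\<in>Ml1 - Adv. phi1 l \<le> Suc k \<and> a^(Suc k - phi1 l) * v1 l \<in> convex hull (\<Union>r\<in>{..d1 l}. Omega a c Adv X r (Suc k)))"
proof -
  obtain U N where b: "v1 = app_v U rx v0" "phi1 = app_phi U k phi0"
       "d1 = (\<lambda>l. app_d U rt d0 l + 1)" "Ml1 = N" and s: "U \<subseteq> J" "N \<subseteq> Ml \<union> U" and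
       t: "tau1 = None \<or> (card N \<ge> 2*f+1 \<and>
          (xh1, tau1) = filt f a k N (app_v U rx v0) (app_d U rt d0) (app_phi U k phi0))"
    using ns_struct[OF ns finite finite] by blast
  define V where "V = app_v U rx v0"
  define D where "D = app_d U rt d0"
  define P where "P = app_phi U k phi0"
  have C: "\<forall>l\<in>N - Adv. P l \<le> k \<and> a^(k - P l) * V l \<in> convex hull (\<Union>r\<in>{..D l}. Omega a c Adv X r k)"
  proof
    fix l assume l: "l \<in> N - Adv"
    show "P l \<le> k \<and> a^(k - P l) * V l \<in> convex hull (\<Union>r\<in>{..D l}. Omega a c Adv X r k)"
    proof (cases "l \<in> U")
      case True
      then show ?thesis using Jg s l by (simp add: P_def V_def D_def app_v_def app_d_def app_phi_def subset_iff)
    next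
      case False
      then show ?thesis using Bg s l by (auto simp add: P_def V_def D_def app_v_def app_d_def app_phi_def subset_iff)
    qed
  qed
  have part2: "\<forall>l\<in>Ml1 - Adv. phi1 l \<le> Suc k \<and> a^(Suc k - phi1 l) * v1 l \<in> convex hull (\<Union>r\<in>{..d1 l}. Omega a c Adv X r (Suc k))"
  proof
    fix l assume l: "l \<in> Ml1 - Adv"
    with C b have h: "P l \<le> k" "a^(k - P l) * V l \<in> convex hull (\<Union>r\<in>{..D l}. Omega a c Adv X r k)" by auto
    have "Suc k - P l = Suc (k - P l)" using h(1) by simp
    hence e: "a^(Suc k - P l) * V l = a * (a^(k - P l) * V l)" by simp
    have "a * (a^(k - P l) * V l) \<in> convex hull (\<Union>r\<in>Suc ` {..D l}. Omega a c Adv X r (Suc k))"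
      by (rule scale_hull[OF h(2)])
    hence "a * (a^(k - P l) * V l) \<in> convex hull (\<Union>r\<in>{..d1 l}. Omega a c Adv X r (Suc k))"
      by (rule hull_mono_R) (auto simp: b D_def)
    moreover have "phi1 l = P l" "v1 l = V l" by (simp_all add: b P_def V_def)
    ultimately show "phi1 l \<le> Suc k \<and> a^(Suc k - phi1 l) * v1 l \<in> convex hull (\<Union>r\<in>{..d1 l}. Omega a c Adv X r (Suc k))"
      using h(1) e by (simp only:) simp
  qed
  have part1: "\<forall>m. tau1 = Some m \<longrightarrow> 1 \<le> m \<and> xh1 \<in> convex hull (\<Union>r\<in>{1..m}. Omega a c Adv X r (Suc k))"
  proof (intro allI impI)
    fix m assume tm: "tau1 = Some m"
    with t have cN: "card N \<ge> 2*f+1" and fe: "(xh1, tau1) = filt f a k N V D P"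
      by (auto simp: V_def D_def P_def)
    define Mx where "Mx = Max (D ` N)"
    have mMx: "m = Mx + 1" using fe tm by (simp add: filt_def Mx_def)
    have xh1: "xh1 = a * trim_val f (image_mset (\<lambda>l. a ^ (k - P l) * V l) (mset_set N))"
      using fe by (simp add: filt_def)
    have "trim_val f (image_mset (\<lambda>l. a ^ (k - P l) * V l) (mset_set N)) \<in>
           convex hull (\<Union>r\<in>{..Mx}. Omega a c Adv X r k)"
    proof (rule trim_in)
      show "finite N" by simp
      show "2*f+1 \<le> card N" by (rule cN)
      show "card (N \<inter> Adv) \<le> f" using cA by (meson card_mono finite inf_le2 le_trans)
      show "convex (convex hull (\<Union>r\<in>{..Mx}. Omega a c Adv X r k))" by simp
      show "\<forall>l\<in>N - Adv. a ^ (k - P l) * V l \<in> convex hull (\<Union>r\<in>{..Mx}. Omega a c Adv X r k)"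
      proof
        fix l assume l: "l \<in> N - Adv"
        have "D l \<le> Mx" using l by (simp add: Mx_def)
        have "a ^ (k - P l) * V l \<in> convex hull (\<Union>r\<in>{..D l}. Omega a c Adv X r k)" using C l by blast
        then show "a ^ (k - P l) * V l \<in> convex hull (\<Union>r\<in>{..Mx}. Omega a c Adv X r k)"
          by (rule hull_mono_R) (use \<open>D l \<le> Mx\<close> in auto)
      qed
    qed
    from scale_hull[OF this] have "xh1 \<in> convex hull (\<Union>r\<in>Suc ` {..Mx}. Omega a c Adv X r (Suc k))"
      by (simp add: xh1)
    hence "xh1 \<in> convex hull (\<Union>r\<in>{1..m}. Omega a c Adv X r (Suc k))"
      by (rule hull_mono_R) (auto simp: mMx)
    with mMx show "1 \<le> m \<and> xh1 \<in> convex hull (\<Union>r\<in>{1..m}. Omega a c Adv X r (Suc k))" by simp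
  qed
  from part1 part2 show ?thesis by blast
qed



theorem lemma7:
  fixes a :: real and c gain :: "'n::finite \<Rightarrow> real" and f :: nat and Adv :: "'n set"
    and E :: "nat \<Rightarrow> ('n \<times> 'n) set" and x :: "nat \<Rightarrow> real"
    and msg :: "nat \<Rightarrow> 'n \<Rightarrow> 'n \<Rightarrow> (real \<times> nat option) option"
    and xh :: "'n \<Rightarrow> nat \<Rightarrow> real" and tau :: "'n \<Rightarrow> nat \<Rightarrow> nat option"
    and M :: "'n \<Rightarrow> nat \<Rightarrow> 'n set" and v :: "'n \<Rightarrow> nat \<Rightarrow> 'n \<Rightarrow> real"
    and d phi :: "'n \<Rightarrow> nat \<Rightarrow> 'n \<Rightarrow> nat"
    and i :: 'n and k m :: nat
  assumes "alg2_exec a c gain f Adv E x msg xh tau M v d phi"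
    and "card Adv \<le> f"
    and "c i = 0" and "i \<notin> Adv"
    and "k > 0" and "m > 0" and "tau i k = Some m"
  shows "xh i k \<in> convex hull (\<Union>r\<in>{1..m}. Omega a c Adv xh r k)"
proof -
  note ex = assms(1)[unfolded alg2_exec_def]
  have msgR: "\<And>k l j. l \<notin> Adv \<Longrightarrow> (l, j) \<in> E k \<Longrightarrow> l \<noteq> j \<Longrightarrow> msg k l j = Some (xh l k, tau l k)"
    using ex by blast
  have src: "\<And>s k. s \<notin> Adv \<Longrightarrow> c s \<noteq> 0 \<Longrightarrow> tau s k = Some 0" using ex by blast
  have ns0: "\<And>j. j \<notin> Adv \<Longrightarrow> c j = 0 \<Longrightarrow> tau j 0 = None \<and> M j 0 = {}" using ex by blast
  have nsk: "\<And>j k. j \<notin> Adv \<Longrightarrow> c j = 0 \<Longrightarrow> ns_step f a k (Jset E msg j k)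
               (\<lambda>l. fst (the (msg k l j))) (\<lambda>l. the (snd (the (msg k l j))))
               (xh j k) (tau j k) (M j k) (v j k) (d j k) (phi j k)
               (xh j (Suc k)) (tau j (Suc k)) (M j (Suc k)) (v j (Suc k)) (d j (Suc k)) (phi j (Suc k))"
    using ex by blast
  have main: "\<forall>j. j \<notin> Adv \<longrightarrow> c j = 0 \<longrightarrow>
     (\<forall>m. tau j k = Some m \<longrightarrow> 1 \<le> m \<and> xh j k \<in> convex hull (\<Union>r\<in>{1..m}. Omega a c Adv xh r k)) \<and>
     (\<forall>l\<in>M j k - Adv. phi j k l \<le> k \<and> a^(k - phi j k l) * v j k l \<in> convex hull (\<Union>r\<in>{..d j k l}. Omega a c Adv xh r k))"
    for k
  proof (induction k)
    case 0
    then show ?case using ns0 by simp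
  next
    case (Suc k)
    show ?case
    proof (intro allI impI)
      fix j assume j: "j \<notin> Adv" "c j = 0"
      let ?J = "Jset E msg j k"
      let ?rx = "\<lambda>l. fst (the (msg k l j))"
      let ?rt = "\<lambda>l. the (snd (the (msg k l j)))"
      have Jg: "\<forall>l\<in>?J - Adv. ?rx l \<in> convex hull (\<Union>r\<in>{..?rt l}. Omega a c Adv xh r k)"
      proof
        fix l assume l: "l \<in> ?J - Adv"
        then obtain y t where lj: "l \<noteq> j" "(l, j) \<in> E k" "msg k l j = Some (y, Some t)"
          by (auto simp: Jset_def)
        with msgR l have eq: "y = xh l k" "tau l k = Some t" by auto
        have rr: "?rx l = xh l k" "?rt l = t" using lj eq by auto
        show "?rx l \<in> convex hull (\<Union>r\<in>{..?rt l}. Omega a c Adv xh r k)"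
        proof (cases "c l = 0")
          case True
          with Suc.IH l eq have "xh l k \<in> convex hull (\<Union>r\<in>{1..t}. Omega a c Adv xh r k)" by blast
          then show ?thesis unfolding rr by (rule hull_mono_R) auto
        next
          case False
          with src l eq have t0: "t = 0" by fastforce
          have "xh l k \<in> Omega a c Adv xh 0 k" using False l by (auto simp: Omega_def)
          hence "xh l k \<in> (\<Union>r\<in>{..t}. Omega a c Adv xh r k)" using t0 by auto
          then show ?thesis unfolding rr by (rule hull_inc)
        qed
      qed
      have Bg: "\<forall>l\<in>M j k - Adv. phi j k l \<le> k \<and> a^(k - phi j k l) * v j k l \<in> convex hull (\<Union>r\<in>{..d j k l}. Omega a c Adv xh r k)"
        using Suc.IH j by blast
      from step[OF nsk[OF j] assms(2) Jg Bg]
      show "(\<forall>m. tau j (Suc k) = Some m \<longrightarrow> 1 \<le> m \<and> xh j (Suc k) \<in> convex hull (\<Union>r\<in>{1..m}. Omega a c Adv xh r (Suc k))) \<and>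
     (\<forall>l\<in>M j (Suc k) - Adv. phi j (Suc k) l \<le> Suc k \<and> a^(Suc k - phi j (Suc k) l) * v j (Suc k) l \<in> convex hull (\<Union>r\<in>{..d j (Suc k) l}. Omega a c Adv xh r (Suc k)))" .
    qed
  qed
  note h1 = mp[OF mp[OF spec[OF main[of k], of i] assms(4)] assms(3)]
  note h2 = mp[OF spec[OF conjunct1[OF h1], of m] assms(7)]
  show ?thesis by (rule conjunct2[OF h2])
qed


end
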